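(* Cycle-CTL* (CTL*$_{cd}$) has neither the finite-model property nor the tree-model property, and it is not invariant under (ordinary) bisimulation. Precisely: (1) there is a satisfiable CTL*$_{cd}$ state formula that is not satisfied by any Kripke structure with finitely many worlds; (2) there is a satisfiable CTL*$_{cd}$ state formula $\varphi$ such that $\mathcal K\not\models\varphi$ for every Kripke structure $\mathcal K$ whose transition graph $(W,R)$ is a tree with root $w_I$; (3) there are Kripke structures $\mathcal K_1,\mathcal K_2$ and a bisimulation between them, and a CTL*$_{cd}$ state formula $\varphi$, such that $\mathcal K_1\models\varphi$ and $\mathcal K_2\not\models\varphi$.
   Context: A Kripke structure over a finite set $AP$ of atomic propositions is a tuple $\mathcal K=(AP,W,R,L,w_I)$ where $W$ is a countable non-empty set of worlds, $w_I\in W$ is the initial world, $R\subseteq W\times W$ is a left-total transition relation (every world has at least one $R$-successor), and $L:W\to 2^{AP}$ is a labelling function. A path is an infinite sequence $\pi=\pi_0\pi_1\cdots$ of worlds with $(\pi_i,\pi_{i+1})\in R$ for all $i\in\mathbb N$; $\mathrm{Pth}(w)$ is the set of paths with $\pi_0=w$. A path $\pi$ is a cycle if for every $i\in\mathbb N$ there is $j>i$ with $\pi_j=\pi_0$ (i.e. $\pi_0$ occurs infinitely often in $\pi$); $\mathrm{Cyc}(w)$ is the set of cycles with $\pi_0=w$. Syntax of CTL*$_{cd}$: state formulas $\varphi::=p\mid\neg\varphi\mid\varphi\wedge\varphi\mid\varphi\vee\varphi\mid \mathsf E\psi\mid\mathsf A\psi\mid\mathsf E^{c}\psi\mid\mathsf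 A^{c}\psi$ with $p\in AP$; path formulas $\psi::=\varphi\mid\neg\psi\mid\psi\wedge\psi\mid\psi\vee\psi\mid\mathsf X\psi\mid\psi\,\mathsf U\,\psi$. Semantics: $\mathcal K,w\models p$ iff $p\in L(w)$; Boolean connectives as usual; $\mathcal K,w\models\mathsf E\psi$ iff some $\pi\in\mathrm{Pth}(w)$ has $\mathcal K,\pi,0\models\psi$; $\mathcal K,w\models\mathsf A\psi$ iff every $\pi\in\mathrm{Pth}(w)$ has $\mathcal K,\pi,0\models\psi$; $\mathcal K,w\models\mathsf E^{c}\psi$ iff some $\pi\in\mathrm{Cyc}(w)$ has $\mathcal K,\pi,0\models\psi$; $\mathcal K,w\models\mathsf A^{c}\psi$ iff every $\pi\in\mathrm{Cyc}(w)$ has $\mathcal K,\pi,0\models\psi$. For paths: $\mathcal K,\pi,i\models\varphi$ (state formula) iff $\mathcal K,\pi_i\models\varphi$; Boolean connectives as usual; $\mathcal K,\pi,i\models\mathsf X\psi$ iff $\mathcal K,\pi,i+1\models\psi$; $\mathcal K,\pi,i\models\psi_1\mathsf U\psi_2$ iff there is $k\ge0$ with $\mathcal K,\pi,i+k\models\psi_2$ and $\mathcal K,\pi,i+j\models\psi_1$ for all $0\le j<k$. $\mathcal K\models\varphi$ iff $\mathcal K,w_I\models\varphi$. A state formula is satisfiable if $\mathcal K\models\varphi$ for some Kripke structure $\mathcal K$. CTL* is the fragment without $\mathsf E^c,\mathsf A^c$. A bisimulation between $\mathcal K_1=(AP,W_1,R_1,L_1,w_{I,1})$ and $\mathcal K_2=(AP,W_2,R_2,L_2,w_{I,2})$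 is a relation $B\subseteq W_1\times W_2$ with $(w_{I,1},w_{I,2})\in B$ such that for all $(w_1,w_2)\in B$: $L_1(w_1)=L_2(w_2)$; for every $R_1$-successor $v_1$ of $w_1$ there is an $R_2$-successor $v_2$ of $w_2$ with $(v_1,v_2)\in B$; and for every $R_2$-successor $v_2$ of $w_2$ there is an $R_1$-successor $v_1$ of $w_1$ with $(v_1,v_2)\in B$. *)

theory Defs
  imports Main
begin

(* Kripke structures over atomic propositions of type 'p.  Worlds are natural
   numbers: every countable non-empty world set is in bijection with a subset of nat. *)
record 'p kripke =
  AP :: "'p set"
  W  :: "nat set"
  R  :: "(nat \<times> nat) set"
  L  :: "nat \<Rightarrow> 'p set"
  wI :: nat

definition kripke :: "'p kripke \<Rightarrow> bool" where
  "kripke K \<longleftrightarrow> finite (AP K) \<and> W K \<noteq> {} \<and> wI K \<in> W K \<and> R K \<subseteq> W K \<times> W K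
     \<and> (\<forall>w\<in>W K. \<exists>v. (w, v) \<in> R K) \<and> (\<forall>w\<in>W K. L K w \<subseteq> AP K)"

definition is_path :: "'p kripke \<Rightarrow> (nat \<Rightarrow> nat) \<Rightarrow> bool" where
  "is_path K \<pi> \<longleftrightarrow> (\<forall>i. (\<pi> i, \<pi> (Suc i)) \<in> R K)"

definition Pth :: "'p kripke \<Rightarrow> nat \<Rightarrow> (nat \<Rightarrow> nat) set" where
  "Pth K w = {\<pi>. is_path K \<pi> \<and> \<pi> 0 = w}"

definition is_cycle :: "'p kripke \<Rightarrow> (nat \<Rightarrow> nat) \<Rightarrow> bool" where
  "is_cycle K \<pi> \<longleftrightarrow> is_path K \<pi> \<and> (\<forall>i. \<exists>j>i. \<pi> j = \<pi> 0)"

definition Cyc :: "'p kripke \<Rightarrow> nat \<Rightarrow> (nat \<Rightarrow> nat) set" where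
  "Cyc K w = {\<pi>. is_cycle K \<pi> \<and> \<pi> 0 = w}"

datatype 'p sform =
    Prop 'p
  | SNot "'p sform"
  | SAnd "'p sform" "'p sform"
  | SOr "'p sform" "'p sform"
  | Ex "'p pform"
  | All "'p pform"
  | ExC "'p pform"
  | AllC "'p pform"
and 'p pform =
    State "'p sform"
  | PNot "'p pform"
  | PAnd "'p pform" "'p pform"
  | POr "'p pform" "'p pform"
  | Next "'p pform"
  | Until "'p pform" "'p pform"

fun satS :: "'p kripke \<Rightarrow> nat \<Rightarrow> 'p sform \<Rightarrow> bool"
and satP :: "'p kripke \<Rightarrow> (nat \<Rightarrow> nat) \<Rightarrow> nat \<Rightarrow> 'p pform \<Rightarrow> bool" where
  "satS K w (Prop p) \<longleftrightarrow> p \<in> L K w"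
| "satS K w (SNot \<phi>) \<longleftrightarrow> \<not> satS K w \<phi>"
| "satS K w (SAnd \<phi> \<psi>) \<longleftrightarrow> satS K w \<phi> \<and> satS K w \<psi>"
| "satS K w (SOr \<phi> \<psi>) \<longleftrightarrow> satS K w \<phi> \<or> satS K w \<psi>"
| "satS K w (Ex \<psi>) \<longleftrightarrow> (\<exists>\<pi>\<in>Pth K w. satP K \<pi> 0 \<psi>)"
| "satS K w (All \<psi>) \<longleftrightarrow> (\<forall>\<pi>\<in>Pth K w. satP K \<pi> 0 \<psi>)"
| "satS K w (ExC \<psi>) \<longleftrightarrow> (\<exists>\<pi>\<in>Cyc K w. satP K \<pi> 0 \<psi>)"
| "satS K w (AllC \<psi>) \<longleftrightarrow> (\<forall>\<pi>\<in>Cyc K w. satP K \<pi> 0 \<psi>)"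
| "satP K \<pi> i (State \<phi>) \<longleftrightarrow> satS K (\<pi> i) \<phi>"
| "satP K \<pi> i (PNot \<psi>) \<longleftrightarrow> \<not> satP K \<pi> i \<psi>"
| "satP K \<pi> i (PAnd \<psi>1 \<psi>2) \<longleftrightarrow> satP K \<pi> i \<psi>1 \<and> satP K \<pi> i \<psi>2"
| "satP K \<pi> i (POr \<psi>1 \<psi>2) \<longleftrightarrow> satP K \<pi> i \<psi>1 \<or> satP K \<pi> i \<psi>2"
| "satP K \<pi> i (Next \<psi>) \<longleftrightarrow> satP K \<pi> (Suc i) \<psi>"
| "satP K \<pi> i (Until \<psi>1 \<psi>2) \<longleftrightarrow>
     (\<exists>k. satP K \<pi> (i + k) \<psi>2 \<and> (\<forall>j<k. satP K \<pi> (i + j) \<psi>1))"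

definition models :: "'p kripke \<Rightarrow> 'p sform \<Rightarrow> bool" where
  "models K \<phi> \<longleftrightarrow> satS K (wI K) \<phi>"

fun atomsS :: "'p sform \<Rightarrow> 'p set"
and atomsP :: "'p pform \<Rightarrow> 'p set" where
  "atomsS (Prop p) = {p}"
| "atomsS (SNot \<phi>) = atomsS \<phi>"
| "atomsS (SAnd \<phi> \<psi>) = atomsS \<phi> \<union> atomsS \<psi>"
| "atomsS (SOr \<phi> \<psi>) = atomsS \<phi> \<union> atomsS \<psi>"
| "atomsS (Ex \<psi>) = atomsP \<psi>"
| "atomsS (All \<psi>) = atomsP \<psi>"
| "atomsS (ExC \<psi>) = atomsP \<psi>"
| "atomsS (AllC \<psi>) = atomsP \<psi>"
| "atomsP (State \<phi>) = atomsS \<phi>"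
| "atomsP (PNot \<psi>) = atomsP \<psi>"
| "atomsP (PAnd \<psi>1 \<psi>2) = atomsP \<psi>1 \<union> atomsP \<psi>2"
| "atomsP (POr \<psi>1 \<psi>2) = atomsP \<psi>1 \<union> atomsP \<psi>2"
| "atomsP (Next \<psi>) = atomsP \<psi>"
| "atomsP (Until \<psi>1 \<psi>2) = atomsP \<psi>1 \<union> atomsP \<psi>2"

definition over_AP :: "'p set \<Rightarrow> 'p sform \<Rightarrow> bool" where
  "over_AP Ap \<phi> \<longleftrightarrow> atomsS \<phi> \<subseteq> Ap"

definition satisfiable_over :: "'p set \<Rightarrow> 'p sform \<Rightarrow> bool" where
  "satisfiable_over Ap \<phi> \<longleftrightarrow> (\<exists>K. kripke K \<and> AP K = Ap \<and> models K \<phi>)"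

definition is_tree :: "'p kripke \<Rightarrow> bool" where
  "is_tree K \<longleftrightarrow> (\<forall>w\<in>W K. (wI K, w) \<in> (R K)\<^sup>*)
     \<and> (\<forall>v. (v, wI K) \<notin> R K)
     \<and> (\<forall>w\<in>W K - {wI K}. \<exists>!v. (v, w) \<in> R K)"

definition bisimulation :: "'p kripke \<Rightarrow> 'p kripke \<Rightarrow> (nat \<times> nat) set \<Rightarrow> bool" where
  "bisimulation K1 K2 B \<longleftrightarrow> B \<subseteq> W K1 \<times> W K2 \<and> (wI K1, wI K2) \<in> B \<and>
     (\<forall>(w1, w2)\<in>B. L K1 w1 = L K2 w2
        \<and> (\<forall>v1. (w1, v1) \<in> R K1 \<longrightarrow> (\<exists>v2. (w2, v2) \<in> R K2 \<and> (v1, v2) \<in> B))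
        \<and> (\<forall>v2. (w2, v2) \<in> R K2 \<longrightarrow> (\<exists>v1. (w1, v1) \<in> R K1 \<and> (v1, v2) \<in> B)))"

end

theory Submission
  imports Defs
begin

definition tt :: "nat sform" where "tt = SOr (Prop 0) (SNot (Prop 0))"
definition cyc :: "nat sform" where "cyc = ExC (State tt)"
definition phi1 :: "nat sform" where "phi1 = All (PNot (Until (State tt) (State cyc)))"

definition Kc :: "nat kripke" where
  "Kc = \<lparr>AP = {0}, W = UNIV, R = {(n, Suc n) | n. True}, L = (\<lambda>_. {}), wI = 0\<rparr>"
definition Kl :: "nat kripke" where
  "Kl = \<lparr>AP = {0}, W = {0}, R = {(0,0)}, L = (\<lambda>_. {}), wI = 0\<rparr>"

lemma tt_true[simp]: "satS K w tt" by (simp add: tt_def)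

lemma kripke_Kc: "kripke Kc" by (auto simp: kripke_def Kc_def)
lemma kripke_Kl: "kripke Kl" by (auto simp: kripke_def Kl_def)

lemma chain_path: "is_path Kc \<pi> \<Longrightarrow> \<pi> k = \<pi> 0 + k"
proof (induction k)
  case 0 then show ?case by simp
next
  case (Suc k)
  then have "(\<pi> k, \<pi> (Suc k)) \<in> R Kc" unfolding is_path_def by blast
  then have "\<pi> (Suc k) = Suc (\<pi> k)" by (auto simp: Kc_def)
  with Suc show ?case by simp
qed

lemma chain_nocyc: "\<not> is_cycle Kc \<pi>"
proof
  assume c: "is_cycle Kc \<pi>"
  then obtain j where "j > 0" "\<pi> j = \<pi> 0" unfolding is_cycle_def by blast
  moreover have "\<pi> j = \<pi> 0 + j" using c chain_path unfolding is_cycle_def by blast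
  ultimately show False by simp
qed

lemma Kc_nocyc: "\<not> satS Kc w cyc"
  using chain_nocyc by (auto simp: cyc_def Cyc_def)

lemma Kl_cyc: "satS Kl 0 cyc"
proof -
  have "(\<lambda>_. 0) \<in> Cyc Kl 0"
    by (auto simp: Cyc_def is_cycle_def is_path_def Kl_def intro: exI[of _ "Suc _"])
  then show ?thesis by (auto simp: cyc_def)
qed

lemma finite_has_cyc:
  assumes K: "kripke K" and fin: "finite (W K)" and that: "\<pi> \<in> Pth K (wI K)"
  shows "\<exists>i. satS K (\<pi> i) cyc"
proof -
  have p: "\<And>n. (\<pi> n, \<pi> (Suc n)) \<in> R K" using that by (simp add: Pth_def is_path_def)
  have inW: "\<pi> n \<in> W K" for n
  proof (cases n)
    case 0 then show ?thesis using that K by (simp add: Pth_def kripke_def)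
  next
    case (Suc m) then show ?thesis using p[of m] K by (auto simp: kripke_def)
  qed
  have "\<not> inj \<pi>"
  proof
    assume "inj \<pi>"
    then have "infinite (range \<pi>)" using finite_imageD infinite_UNIV_nat by blast
    moreover have "range \<pi> \<subseteq> W K" using inW by auto
    ultimately show False using fin finite_subset by blast
  qed
  then obtain a b where "a \<noteq> b" "\<pi> a = \<pi> b" unfolding inj_def by blast
  then obtain i j where ij: "i < j" "\<pi> i = \<pi> j"
    by (metis linorder_neqE_nat)
  define d where "d = j - i"
  have d: "d > 0" "i + d = j" using ij by (auto simp: d_def)
  define c where "c = (\<lambda>k. \<pi> (i + k mod d))"
  have cp: "(c k, c (Suc k)) \<in> R K" for k
  proof (cases "Suc (k mod d) = d")
    case True
    then have "c (Suc k) = \<pi> j" using ij d by (simp add: c_def mod_Suc)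
    moreover have "k mod d = d - 1" using True by simp
    then have "c k = \<pi> (i + (d - 1))" by (simp add: c_def)
    moreover have "Suc (i + (d - 1)) = j" using d by simp
    ultimately show ?thesis using p[of "i + (d - 1)"] by simp
  next
    case False
    then have "c (Suc k) = \<pi> (Suc (i + k mod d))" by (simp add: c_def mod_Suc)
    then show ?thesis using p[of "i + k mod d"] by (simp add: c_def)
  qed
  have cc: "\<exists>m>n. c m = c 0" for n
  proof (intro exI conjI)
    have "1 * Suc n \<le> d * Suc n" by (rule mult_le_mono1) (use d in linarith)
    then have "Suc n \<le> d * Suc n" by (simp only: mult_1)
    then show "d * Suc n > n" by (rule Suc_le_lessD)
    show "c (d * Suc n) = c 0" by (simp add: c_def)
  qed
  have "c \<in> Cyc K (\<pi> i)" using cp cc by (simp add: Cyc_def is_cycle_def is_path_def c_def)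
  then show ?thesis by (auto simp: cyc_def)
qed

lemma cyc_pred: assumes c: "is_cycle K \<pi>" "\<pi> 0 = wI K" shows "\<exists>m. (\<pi> m, wI K) \<in> R K"
proof -
  have "\<forall>i. \<exists>j>i. \<pi> j = \<pi> 0" using c(1) by (simp add: is_cycle_def)
  then have "\<exists>j>0. \<pi> j = \<pi> 0" by (rule spec)
  then obtain j where j: "j > 0" "\<pi> j = \<pi> 0" by (elim exE conjE)
  then obtain m where jm: "j = Suc m" using gr0_implies_Suc by blast
  have "(\<pi> m, \<pi> (Suc m)) \<in> R K" using c(1) by (simp add: is_cycle_def is_path_def)
  then have "(\<pi> m, wI K) \<in> R K" using j(2) c(2) jm by simp
  then show ?thesis by (rule exI)
qed

theorem mainTheorem1:
  shows "(\<exists>Ap :: nat set. \<exists>\<phi>. finite Ap \<and> over_AP Ap \<phi> \<and> satisfiable_over Ap \<phi> \<and>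
            (\<forall>K. kripke K \<and> AP K = Ap \<and> finite (W K) \<longrightarrow> \<not> models K \<phi>))
       \<and> (\<exists>Ap :: nat set. \<exists>\<phi>. finite Ap \<and> over_AP Ap \<phi> \<and> satisfiable_over Ap \<phi> \<and>
            (\<forall>K. kripke K \<and> AP K = Ap \<and> is_tree K \<longrightarrow> \<not> models K \<phi>))
       \<and> (\<exists>(K1 :: nat kripke) K2 B \<phi>. kripke K1 \<and> kripke K2 \<and> AP K1 = AP K2 \<and>
            over_AP (AP K1) \<phi> \<and> bisimulation K1 K2 B \<and> models K1 \<phi> \<and> \<not> models K2 \<phi>)"
proof (intro conjI)
  show "\<exists>Ap :: nat set. \<exists>\<phi>. finite Ap \<and> over_AP Ap \<phi> \<and> satisfiable_over Ap \<phi> \<and>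
            (\<forall>K. kripke K \<and> AP K = Ap \<and> finite (W K) \<longrightarrow> \<not> models K \<phi>)"
  proof (intro exI conjI allI impI)
    show "finite {0::nat}" by simp
    show "over_AP {0} phi1" by (simp add: over_AP_def phi1_def cyc_def tt_def)
    show "satisfiable_over {0} phi1"
      unfolding satisfiable_over_def
    proof (intro exI[of _ Kc] conjI)
      show "kripke Kc" by (rule kripke_Kc)
      show "AP Kc = {0}" by (simp add: Kc_def)
      show "models Kc phi1" by (simp add: models_def phi1_def Kc_nocyc)
    qed
    fix K :: "nat kripke" assume a: "kripke K \<and> AP K = {0} \<and> finite (W K)"
    show "\<not> models K phi1"
    proof
      assume "models K phi1"
      then have m: "\<forall>\<pi>\<in>Pth K (wI K). \<forall>k. \<not> satS K (\<pi> k) cyc"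
        by (auto simp: models_def phi1_def)
      have "\<forall>w\<in>W K. \<exists>v. (w, v) \<in> R K" using a by (simp add: kripke_def)
      then obtain f where f: "\<And>w. w \<in> W K \<Longrightarrow> (w, f w) \<in> R K" by metis
      have RW: "\<And>x y. (x, y) \<in> R K \<Longrightarrow> y \<in> W K" using a by (auto simp: kripke_def)
      define \<pi> where "\<pi> = (\<lambda>n. (f ^^ n) (wI K))"
      have inW: "\<pi> n \<in> W K" for n
      proof (induction n)
        case 0 then show ?case using a by (simp add: kripke_def \<pi>_def)
      next
        case (Suc n)
        have "\<pi> (Suc n) = f (\<pi> n)" by (simp add: \<pi>_def)
        then show ?case using f[OF Suc] RW by metis
      qed
      have "(\<pi> n, \<pi> (Suc n)) \<in> R K" for n
      proof -
        have "\<pi> (Suc n) = f (\<pi> n)" by (simp add: \<pi>_def)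
        then show ?thesis using f[OF inW[of n]] by simp
      qed
      moreover have "\<pi> 0 = wI K" by (simp add: \<pi>_def)
      ultimately have "\<pi> \<in> Pth K (wI K)" by (simp add: Pth_def is_path_def)
      then show False using finite_has_cyc[of K \<pi>] a m by blast
    qed
  qed
  show "\<exists>Ap :: nat set. \<exists>\<phi>. finite Ap \<and> over_AP Ap \<phi> \<and> satisfiable_over Ap \<phi> \<and>
            (\<forall>K. kripke K \<and> AP K = Ap \<and> is_tree K \<longrightarrow> \<not> models K \<phi>)"
  proof (intro exI conjI allI impI)
    show "finite {0::nat}" by simp
    show "over_AP {0} cyc" by (simp add: over_AP_def cyc_def tt_def)
    show "satisfiable_over {0} cyc"
      unfolding satisfiable_over_def
    proof (intro exI[of _ Kl] conjI)
      show "kripke Kl" by (rule kripke_Kl)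
      show "AP Kl = {0}" by (simp add: Kl_def)
      have "wI Kl = 0" by (simp add: Kl_def)
      then show "models Kl cyc" using Kl_cyc by (simp add: models_def)
    qed
    fix K :: "nat kripke" assume a: "kripke K \<and> AP K = {0} \<and> is_tree K"
    show "\<not> models K cyc"
    proof
      assume "models K cyc"
      then obtain \<pi> where "\<pi> \<in> Cyc K (wI K)" by (auto simp: models_def cyc_def)
      then have c: "is_cycle K \<pi>" "\<pi> 0 = wI K" by (auto simp: Cyc_def)
      then obtain m where "(\<pi> m, wI K) \<in> R K" using cyc_pred by blast
      moreover have t: "is_tree K" using a by simp
      have "\<forall>v. (v, wI K) \<notin> R K" by (rule conjunct1[OF conjunct2[OF t[unfolded is_tree_def]]])
      ultimately show False by blast
    qed
  qed
  show "\<exists>(K1 :: nat kripke) K2 B \<phi>. kripke K1 \<and> kripke K2 \<and> AP K1 = AP K2 \<and>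
            over_AP (AP K1) \<phi> \<and> bisimulation K1 K2 B \<and> models K1 \<phi> \<and> \<not> models K2 \<phi>"
  proof (intro exI conjI)
    show "kripke Kl" by (rule kripke_Kl)
    show "kripke Kc" by (rule kripke_Kc)
    show "AP Kl = AP Kc" by (simp add: Kl_def Kc_def)
    show "over_AP (AP Kl) cyc" by (simp add: over_AP_def cyc_def tt_def Kl_def)
    show "bisimulation Kl Kc ({0} \<times> UNIV)"
      by (auto simp: bisimulation_def Kl_def Kc_def)
    have "wI Kl = 0" by (simp add: Kl_def)
    then show "models Kl cyc" using Kl_cyc by (simp add: models_def)
    show "\<not> models Kc cyc" using Kc_nocyc by (simp add: models_def)
  qed
qed

end
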